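(* For any connected non-complete graph $G$, $$\mu_t(G)\le n(G)-\gamma_c(G).$$
   Context: All graphs are finite, simple and undirected; $n(G)$ denotes the order of $G$. The connected domination number $\gamma_c(G)$ is the minimum cardinality of a dominating set $D$ of $G$ such that the induced subgraph $G[D]$ is connected. Let $G$ be a connected graph and $X\subseteq V(G)$. Two vertices $x,y\in V(G)$ are $X$-visible if there exists a shortest $x,y$-path in $G$ none of whose internal vertices (i.e., vertices other than $x$ and $y$) belongs to $X$. The set $X$ is a total mutual-visibility set of $G$ if every two vertices of $G$ are $X$-visible (the empty set is allowed). The total mutual-visibility number $\mu_t(G)$ is the maximum cardinality of a total mutual-visibility set of $G$. *)

theory Defs
  imports Main
begin

definition simple_graph :: "'a set \<Rightarrow> ('a \<Rightarrow> 'a \<Rightarrow> bool) \<Rightarrow> bool" where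
  "simple_graph V E \<longleftrightarrow> finite V \<and> (\<forall>x y. E x y \<longrightarrow> x \<in> V \<and> y \<in> V)
     \<and> (\<forall>x y. E x y \<longrightarrow> E y x) \<and> (\<forall>x. \<not> E x x)"

(* a walk given as its nonempty list of vertices; its length is (length xs - 1) edges *)
definition walk :: "'a set \<Rightarrow> ('a \<Rightarrow> 'a \<Rightarrow> bool) \<Rightarrow> 'a list \<Rightarrow> bool" where
  "walk V E xs \<longleftrightarrow> xs \<noteq> [] \<and> set xs \<subseteq> V \<and> (\<forall>i. Suc i < length xs \<longrightarrow> E (xs ! i) (xs ! Suc i))"

definition walk_betw :: "'a set \<Rightarrow> ('a \<Rightarrow> 'a \<Rightarrow> bool) \<Rightarrow> 'a \<Rightarrow> 'a list \<Rightarrow> 'a \<Rightarrow> bool" where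
  "walk_betw V E x xs y \<longleftrightarrow> walk V E xs \<and> hd xs = x \<and> last xs = y"

definition connected_graph :: "'a set \<Rightarrow> ('a \<Rightarrow> 'a \<Rightarrow> bool) \<Rightarrow> bool" where
  "connected_graph V E \<longleftrightarrow> V \<noteq> {} \<and> (\<forall>x\<in>V. \<forall>y\<in>V. \<exists>xs. walk_betw V E x xs y)"

definition complete_graph :: "'a set \<Rightarrow> ('a \<Rightarrow> 'a \<Rightarrow> bool) \<Rightarrow> bool" where
  "complete_graph V E \<longleftrightarrow> (\<forall>x\<in>V. \<forall>y\<in>V. x \<noteq> y \<longrightarrow> E x y)"

definition dist :: "'a set \<Rightarrow> ('a \<Rightarrow> 'a \<Rightarrow> bool) \<Rightarrow> 'a \<Rightarrow> 'a \<Rightarrow> nat" where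
  "dist V E x y = (LEAST n. \<exists>xs. walk_betw V E x xs y \<and> length xs = Suc n)"

definition shortest_path :: "'a set \<Rightarrow> ('a \<Rightarrow> 'a \<Rightarrow> bool) \<Rightarrow> 'a \<Rightarrow> 'a list \<Rightarrow> 'a \<Rightarrow> bool" where
  "shortest_path V E x xs y \<longleftrightarrow> walk_betw V E x xs y \<and> length xs = Suc (dist V E x y)"

definition internal :: "'a list \<Rightarrow> 'a set" where
  "internal xs = set (butlast (tl xs))"

definition visible :: "'a set \<Rightarrow> ('a \<Rightarrow> 'a \<Rightarrow> bool) \<Rightarrow> 'a set \<Rightarrow> 'a \<Rightarrow> 'a \<Rightarrow> bool" where
  "visible V E X x y \<longleftrightarrow> (\<exists>xs. shortest_path V E x xs y \<and> internal xs \<inter> X = {})"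

definition total_mv_set :: "'a set \<Rightarrow> ('a \<Rightarrow> 'a \<Rightarrow> bool) \<Rightarrow> 'a set \<Rightarrow> bool" where
  "total_mv_set V E X \<longleftrightarrow> X \<subseteq> V \<and> (\<forall>x\<in>V. \<forall>y\<in>V. visible V E X x y)"

definition mu_t :: "'a set \<Rightarrow> ('a \<Rightarrow> 'a \<Rightarrow> bool) \<Rightarrow> nat" where
  "mu_t V E = Max {card X | X. total_mv_set V E X}"

definition dominating :: "'a set \<Rightarrow> ('a \<Rightarrow> 'a \<Rightarrow> bool) \<Rightarrow> 'a set \<Rightarrow> bool" where
  "dominating V E D \<longleftrightarrow> D \<subseteq> V \<and> (\<forall>v\<in>V. v \<in> D \<or> (\<exists>u\<in>D. E u v))"

definition induced :: "('a \<Rightarrow> 'a \<Rightarrow> bool) \<Rightarrow> 'a set \<Rightarrow> 'a \<Rightarrow> 'a \<Rightarrow> bool" where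
  "induced E D = (\<lambda>x y. x \<in> D \<and> y \<in> D \<and> E x y)"

definition connected_dominating :: "'a set \<Rightarrow> ('a \<Rightarrow> 'a \<Rightarrow> bool) \<Rightarrow> 'a set \<Rightarrow> bool" where
  "connected_dominating V E D \<longleftrightarrow> dominating V E D \<and> connected_graph D (induced E D)"

definition gamma_c :: "'a set \<Rightarrow> ('a \<Rightarrow> 'a \<Rightarrow> bool) \<Rightarrow> nat" where
  "gamma_c V E = Min {card D | D. connected_dominating V E D}"

end

theory Submission
  imports Defs
begin

lemma sp_exists:
  assumes "connected_graph V E" "x \<in> V" "y \<in> V"
  shows "\<exists>xs. shortest_path V E x xs y"
proof -
  obtain xs where w: "walk_betw V E x xs y" using assms unfolding connected_graph_def by blast
  then have ne: "xs \<noteq> []" unfolding walk_betw_def walk_def by auto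
  let ?P = "\<lambda>n. \<exists>xs. walk_betw V E x xs y \<and> length xs = Suc n"
  have "?P (length xs - 1)" using w ne by (intro exI[of _ xs]) auto
  then have "?P (Least ?P)" by (rule LeastI)
  then show ?thesis unfolding shortest_path_def dist_def by blast
qed

lemma walk_len3:
  assumes "walk V E xs" "hd xs = u" "last xs = w" "u \<noteq> w" "\<not> E u w"
  shows "length xs \<ge> 3"
proof -
  have ne: "xs \<noteq> []" using assms(1) unfolding walk_def by auto
  have h: "u = xs ! 0" using assms(2) ne by (simp add: hd_conv_nth)
  have l: "w = xs ! (length xs - 1)" using assms(3) ne by (simp add: last_conv_nth)
  have "length xs \<noteq> 1" using h l assms(4) by auto
  moreover have "length xs \<noteq> 2"
  proof
    assume "length xs = 2"
    then have "E (xs!0) (xs!1)" using assms(1) unfolding walk_def by auto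
    then show False using h l \<open>length xs = 2\<close> assms(5) by simp
  qed
  ultimately show ?thesis using ne by (cases "length xs") auto
qed

lemma second_internal:
  assumes "length xs \<ge> 3"
  shows "xs ! 1 \<in> internal xs"
proof -
  have "length (butlast (tl xs)) \<ge> 1" using assms by simp
  then have "butlast (tl xs) ! 0 \<in> set (butlast (tl xs))" by (intro nth_mem) simp
  moreover have "butlast (tl xs) ! 0 = xs ! 1" using assms
    by (simp add: nth_butlast nth_tl)
  ultimately show ?thesis unfolding internal_def by simp
qed

lemma set_split_internal:
  assumes "xs \<noteq> []"
  shows "set xs \<subseteq> {hd xs, last xs} \<union> internal xs"
proof (cases xs)
  case Nil then show ?thesis using assms by simp
next
  case (Cons a ys)
  show ?thesis
  proof (cases "ys = []")
    case True then show ?thesis using Cons by simp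
  next
    case False
    then have "set ys = set (butlast ys) \<union> {last ys}"
      by (metis append_butlast_last_id set_append empty_set list.simps(15) Un_empty_right Un_insert_right)
    then show ?thesis using Cons False unfolding internal_def by auto
  qed
qed

lemma main:
  assumes sg: "simple_graph V E" and cg: "connected_graph V E"
    and nc: "\<not> complete_graph V E" and X: "total_mv_set V E X"
  shows "connected_dominating V E (V - X)"
proof -
  have XV: "X \<subseteq> V" using X unfolding total_mv_set_def by auto
  have vis: "\<And>x y. x \<in> V \<Longrightarrow> y \<in> V \<Longrightarrow> visible V E X x y" using X unfolding total_mv_set_def by auto
  have sym: "\<And>x y. E x y \<Longrightarrow> E y x" using sg unfolding simple_graph_def by auto
  have nbr: "\<exists>z. z \<in> V - X \<and> E u z" if uwa: "u \<in> V" "w \<in> V" "u \<noteq> w" "\<not> E u w" for u w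
  proof -
    obtain xs where sp: "shortest_path V E u xs w" and int: "internal xs \<inter> X = {}"
      using vis[OF uwa(1,2)] unfolding visible_def by blast
    have wk: "walk V E xs" "hd xs = u" "last xs = w" using sp unfolding shortest_path_def walk_betw_def by auto
    have l3: "length xs \<ge> 3" using walk_len3[OF wk uwa(3,4)] .
    have i1: "xs ! 1 \<in> internal xs" using second_internal[OF l3] .
    have "E (xs!0) (xs!1)" using wk(1) l3 unfolding walk_def by auto
    moreover have "xs!0 = u" using wk(2) l3 by (metis hd_conv_nth list.size(3) not_numeral_le_zero)
    moreover have "xs!1 \<in> V" using wk(1) l3 unfolding walk_def by (auto intro: nth_mem)
    ultimately show ?thesis using i1 int by (intro exI[of _ "xs!1"]) auto
  qed
  obtain u w where uw: "u \<in> V" "w \<in> V" "u \<noteq> w" "\<not> E u w"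
    using nc unfolding complete_graph_def by blast
  have dom: "dominating V E (V - X)"
    unfolding dominating_def
  proof (intro conjI ballI)
    fix x assume x: "x \<in> V"
    show "x \<in> V - X \<or> (\<exists>u\<in>V - X. E u x)"
    proof (cases "x \<in> X")
      case False then show ?thesis using x by auto
    next
      case True
      show ?thesis
      proof (cases "\<exists>v\<in>V. v \<noteq> x \<and> \<not> E x v")
        case True
        then obtain v where "v \<in> V" "v \<noteq> x" "\<not> E x v" by blast
        then obtain z where "z \<in> V - X" "E x z" using nbr[OF x, of v] by auto
        then show ?thesis using sym by blast
      next
        case False
        obtain z where z: "z \<in> V - X" "E u z" using nbr[OF uw] by blast
        then have "z \<noteq> x" using \<open>x \<in> X\<close> by auto
        then have "E x z" using False z by auto
        then show ?thesis using sym z by blast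
      qed
    qed
  qed auto
  have ne: "V - X \<noteq> {}" using nbr[OF uw] by blast
  have con: "connected_graph (V - X) (induced E (V - X))"
    unfolding connected_graph_def
  proof (intro conjI ballI)
    fix a b assume a: "a \<in> V - X" and b: "b \<in> V - X"
    obtain xs where sp: "shortest_path V E a xs b" and int: "internal xs \<inter> X = {}"
      using vis[of a b] a b unfolding visible_def by blast
    have wk: "walk V E xs" "hd xs = a" "last xs = b" using sp unfolding shortest_path_def walk_betw_def by auto
    have nexs: "xs \<noteq> []" using wk unfolding walk_def by auto
    have sub: "set xs \<subseteq> V - X"
    proof -
      have "internal xs \<subseteq> set xs" unfolding internal_def
        by (cases xs) (auto dest: in_set_butlastD)
      then have "internal xs \<subseteq> V - X" using wk(1) int unfolding walk_def by auto
      then show ?thesis using set_split_internal[OF nexs] wk a b by auto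
    qed
    have "walk (V - X) (induced E (V - X)) xs"
      unfolding walk_def induced_def
    proof (intro conjI allI impI)
      fix i assume i: "Suc i < length xs"
      show "xs ! i \<in> V - X" using sub i by (meson Suc_lessD nth_mem subsetD)
      show "xs ! Suc i \<in> V - X" using sub i by (meson nth_mem subsetD)
      show "E (xs ! i) (xs ! Suc i)" using wk(1) i unfolding walk_def by auto
    qed (use nexs sub in auto)
    then show "\<exists>xs. walk_betw (V - X) (induced E (V - X)) a xs b"
      using wk unfolding walk_betw_def by blast
  qed (use ne in auto)
  show ?thesis unfolding connected_dominating_def using dom con by auto
qed

theorem theorem2p4:
  fixes V :: "'a set" and E :: "'a \<Rightarrow> 'a \<Rightarrow> bool"
  assumes "simple_graph V E"
    and "connected_graph V E"
    and "\<not> complete_graph V E"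
  shows "mu_t V E \<le> card V - gamma_c V E"
proof -
  have fin: "finite V" using assms(1) unfolding simple_graph_def by auto
  let ?S = "{card X | X. total_mv_set V E X}"
  have "total_mv_set V E {}"
    unfolding total_mv_set_def visible_def internal_def
    using sp_exists[OF assms(2)] by auto
  then have Sne: "?S \<noteq> {}" by blast
  have "?S \<subseteq> {..card V}" unfolding total_mv_set_def using fin by (auto intro: card_mono)
  then have Sfin: "finite ?S" using finite_subset by blast
  obtain X where X: "total_mv_set V E X" "mu_t V E = card X"
    using Max_in[OF Sfin Sne] unfolding mu_t_def by auto
  have XV: "X \<subseteq> V" using X(1) unfolding total_mv_set_def by auto
  let ?T = "{card D | D. connected_dominating V E D}"
  have cd: "connected_dominating V E (V - X)" using main[OF assms X(1)] .
  have "?T \<subseteq> {..card V}" unfolding connected_dominating_def dominating_def using fin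
    by (auto intro: card_mono)
  then have Tfin: "finite ?T" using finite_subset by blast
  have "gamma_c V E \<le> card (V - X)" unfolding gamma_c_def
    using cd by (intro Min_le[OF Tfin]) blast
  moreover have "card (V - X) = card V - card X" using XV fin by (simp add: card_Diff_subset finite_subset)
  moreover have "card X \<le> card V" using XV fin by (simp add: card_mono)
  ultimately show ?thesis using X(2) by linarith
qed

end
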